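(* Let $(1,f_0,\dots,f_{d-1})$ be the $f$-vector of a simplicial complex. Then $\mu_{i+1}\big((i+2)f_i\big)\le (i+1)f_{i-1}$ for all $1\le i\le d-1$.
   Context: For positive integers $m,i$ let $m=\binom{a_i}{i}+\binom{a_{i-1}}{i-1}+\cdots+\binom{a_j}{j}$ with $a_i>\cdots>a_j\ge j\ge1$ be its unique $i$-th binomial expansion, and $\mu_i(m)=\binom{a_i}{i-1}+\binom{a_{i-1}}{i-2}+\cdots+\binom{a_j}{j-1}$; set $\mu_i(0)=0$. The $f$-vector of a simplicial complex is $(f_{-1},f_0,\dots)$ with $f_i$ the number of faces of cardinality $i+1$, $f_{-1}=1$. *)

theory Defs
  imports Main
begin

definition simplicial_complex :: "'a set set \<Rightarrow> bool" where
  "simplicial_complex K \<longleftrightarrow> finite K \<and> {} \<in> K \<and> (\<forall>F\<in>K. finite F) \<and>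
     (\<forall>F\<in>K. \<forall>G. G \<subseteq> F \<longrightarrow> G \<in> K)"

definition fvec :: "'a set set \<Rightarrow> int \<Rightarrow> nat" where
  "fvec K i = card {F \<in> K. int (card F) = i + 1}"

definition binom_expansion :: "nat \<Rightarrow> nat \<Rightarrow> nat \<Rightarrow> (nat \<Rightarrow> nat) \<Rightarrow> bool" where
  "binom_expansion i m j a \<longleftrightarrow> 1 \<le> j \<and> j \<le> i \<and> j \<le> a j \<and>
     (\<forall>k\<in>{j..<i}. a k < a (Suc k)) \<and> m = (\<Sum>k=j..i. a k choose k)"

definition mu :: "nat \<Rightarrow> nat \<Rightarrow> nat" where
  "mu i m = (if m = 0 then 0 else
     (THE s. \<exists>j a. binom_expansion i m j a \<and> s = (\<Sum>k=j..i. a k choose (k - 1))))"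

end

theory Submission
  imports Defs
begin


lemma choose_big: "1 \<le> k \<Longrightarrow> m < (m + k) choose k"
proof (induction m)
  case 0 then show ?case by simp
next
  case (Suc m)
  obtain k' where k: "k = Suc k'" using Suc.prems by (cases k) auto
  have "Suc m + k choose k = (m + k choose k') + (m + k choose k)"
    using k by simp
  moreover have "1 \<le> (m + k choose k')" using k by (simp add: Suc_le_eq)
  ultimately show ?case using Suc by linarith
qed

definition gr :: "nat \<Rightarrow> nat \<Rightarrow> nat" where
  "gr k m = (LEAST a. m < (Suc a choose k))"

lemma gr_props:
  assumes "1 \<le> k"
  shows "(gr k m choose k) \<le> m \<and> m < (Suc (gr k m) choose k)"
proof -
  have ex: "m < (Suc (m + k - 1) choose k)" using choose_big[OF assms, of m] assms by simp
  have 1: "m < (Suc (gr k m) choose k)" unfolding gr_def by (rule LeastI[where P="\<lambda>a. m < (Suc a choose k)", OF ex])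
  have 2: "(gr k m choose k) \<le> m"
  proof (cases "gr k m")
    case 0 then show ?thesis using assms by (cases k) auto
  next
    case (Suc b)
    have "b < (LEAST a. m < (Suc a choose k))" using Suc unfolding gr_def by simp
    then have "\<not> m < (Suc b choose k)" by (rule not_less_Least)
    then show ?thesis using Suc by simp
  qed
  show ?thesis using 1 2 by simp
qed

lemma gr_unique:
  assumes "(a choose k) \<le> m" "m < (Suc a choose k)"
  shows "gr k m = a"
  unfolding gr_def
proof (rule Least_equality)
  show "m < (Suc a choose k)" by fact
next
  fix b assume b: "m < (Suc b choose k)"
  show "a \<le> b"
  proof (rule ccontr)
    assume "\<not> a \<le> b"
    then have "Suc b \<le> a" by simp
    then have "(Suc b choose k) \<le> (a choose k)" by (rule binomial_right_mono)
    then show False using b assms by simp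
  qed
qed

fun kf :: "nat \<Rightarrow> nat \<Rightarrow> nat" where
  "kf 0 m = 0"
| "kf (Suc k) m = (if m = 0 then 0 else
     (gr (Suc k) m choose k) + kf k (m - (gr (Suc k) m choose Suc k)))"

lemma F_zero[simp]: "kf k 0 = 0" by (cases k) auto

lemma F_char:
  assumes "r < (a choose k)" "0 < (a choose Suc k) + r"
  shows "kf (Suc k) ((a choose Suc k) + r) = (a choose k) + kf k r"
proof -
  have "gr (Suc k) ((a choose Suc k) + r) = a"
  proof (rule gr_unique)
    show "(a choose Suc k) + r < (Suc a choose Suc k)" using assms(1) by simp
  qed simp
  moreover have "(a choose Suc k) + r \<noteq> 0" using assms(2) by linarith
  ultimately show ?thesis by (simp only: kf.simps if_False add_diff_cancel_left')
qed

lemma F_decomp: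
  assumes "0 < m"
  obtains a r where "m = (a choose Suc k) + r" "r < (a choose k)" "Suc k \<le> a"
    "kf (Suc k) m = (a choose k) + kf k r"
proof -
  define a where "a = gr (Suc k) m"
  have p: "(a choose Suc k) \<le> m" "m < (Suc a choose Suc k)"
    using gr_props[of "Suc k" m] a_def by auto
  define r where "r = m - (a choose Suc k)"
  have m: "m = (a choose Suc k) + r" using p r_def by simp
  have r: "r < (a choose k)" using p m by simp
  have "Suc k \<le> a"
  proof (rule ccontr)
    assume "\<not> Suc k \<le> a"
    then have "a choose Suc k = 0" by simp
    moreover have "Suc a choose Suc k \<le> 1"
      using \<open>\<not> Suc k \<le> a\<close> by (cases "a = k") (simp_all add: binomial_eq_0)
    ultimately show False using p assms by simp
  qed
  moreover have "kf (Suc k) m = (a choose k) + kf k r"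
    using assms a_def r_def by simp
  ultimately show ?thesis using that m r by blast
qed

lemma F_one: "kf (Suc 0) m = (if m = 0 then 0 else 1)" by simp

lemma F_mono_Suc: "kf k m \<le> kf k (Suc m)"
proof (induction k arbitrary: m)
  case 0 then show ?case by simp
next
  case (Suc k)
  have monok: "x \<le> y \<Longrightarrow> kf k x \<le> kf k y" for x y
    using Suc.IH by (metis lift_Suc_mono_le)
  show ?case
  proof (cases "m = 0")
    case True then show ?thesis by simp
  next
    case False
    then obtain a r where m: "m = (a choose Suc k) + r" and r: "r < (a choose k)"
      and a: "Suc k \<le> a" and Fm: "kf (Suc k) m = (a choose k) + kf k r"
      using F_decomp[of m k] False by auto
    show ?thesis
    proof (cases "Suc r < (a choose k)")
      case True
      have "kf (Suc k) (Suc m) = (a choose k) + kf k (Suc r)"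
        using F_char[OF True] m by simp
      then show ?thesis using Fm Suc.IH[of r] by simp
    next
      case False
      then have sr: "Suc r = (a choose k)" using r by simp
      have "Suc m = (Suc a choose Suc k) + 0" using m sr by simp
      moreover have "0 < (Suc a choose k)" using a by simp
      ultimately have FS: "kf (Suc k) (Suc m) = (Suc a choose k)"
        using F_char[of 0 "Suc a" k] a by simp
      show ?thesis
      proof (cases k)
        case 0 then show ?thesis using Fm FS by simp
      next
        case (Suc k')
        have "kf k r \<le> kf k (a choose k)" using monok r by simp
        also have "kf k (a choose k) = (a choose k')"
          using F_char[of 0 a k'] Suc a by simp
        finally show ?thesis using Fm FS Suc by simp
      qed
    qed
  qed
qed

lemma F_mono: "x \<le> y \<Longrightarrow> kf k x \<le> kf k y"
  by (metis F_mono_Suc lift_Suc_mono_le)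

lemma F_one_le: "kf (Suc 0) m \<le> 1" by simp

fun N :: "nat \<Rightarrow> nat \<Rightarrow> nat" where
  "N 0 y = 0"
| "N (Suc 0) y = 0"
| "N (Suc (Suc j)) y = (if y = 0 then 0 else
     (gr (Suc j) y choose Suc (Suc j)) + N (Suc j) (y - (gr (Suc j) y choose Suc j)))"

lemma N_zero[simp]: "N k 0 = 0"
proof (cases k)
  case (Suc k') then show ?thesis by (cases k') auto
qed simp

lemma gr_decomp:
  assumes "0 < y"
  obtains b y' where "y = (b choose Suc j) + y'" "y' < (b choose j)" "Suc j \<le> b"
    "gr (Suc j) y = b"
proof -
  define b where "b = gr (Suc j) y"
  have p: "(b choose Suc j) \<le> y" "y < (Suc b choose Suc j)"
    using gr_props[of "Suc j" y] b_def by auto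
  define y' where "y' = y - (b choose Suc j)"
  have m: "y = (b choose Suc j) + y'" using p y'_def by simp
  have r: "y' < (b choose j)" using p m by simp
  have "Suc j \<le> b"
  proof (rule ccontr)
    assume "\<not> Suc j \<le> b"
    then have "b choose Suc j = 0" by simp
    moreover have "Suc b choose Suc j \<le> 1"
      using \<open>\<not> Suc j \<le> b\<close> by (cases "b = j") (simp_all add: binomial_eq_0)
    ultimately show False using p assms by simp
  qed
  then show ?thesis using that m r b_def[symmetric] by blast
qed

lemma N_bound_gen:
  assumes IH: "\<And>x' y'. (j = 0 \<longrightarrow> y' = 0) \<Longrightarrow> kf (Suc j) x' \<le> y' \<Longrightarrow> x' \<le> N (Suc j) y'"
    and H: "kf (Suc (Suc j)) x \<le> y"
  shows "x \<le> N (Suc (Suc j)) y"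
proof (cases "x = 0")
  case True then show ?thesis by simp
next
  case False
  then obtain a x' where x: "x = (a choose Suc (Suc j)) + x'" and x': "x' < (a choose Suc j)"
    and a: "Suc (Suc j) \<le> a" and Fx: "kf (Suc (Suc j)) x = (a choose Suc j) + kf (Suc j) x'"
    using F_decomp[of x "Suc j"] by auto
  have "0 < (a choose Suc j)" using a by simp
  then have ypos: "0 < y" using H Fx by linarith
  then obtain b y' where y: "y = (b choose Suc j) + y'" and y': "y' < (b choose j)"
    and b: "Suc j \<le> b" and g: "gr (Suc j) y = b"
    using gr_decomp[of y j] by auto
  have Ny: "N (Suc (Suc j)) y = (b choose Suc (Suc j)) + N (Suc j) y'"
    using ypos g y by simp
  have ab: "a \<le> b"
  proof (rule ccontr)
    assume "\<not> a \<le> b"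
    then have "Suc b \<le> a" by simp
    then have "(Suc b choose Suc j) \<le> (a choose Suc j)" by (rule binomial_right_mono)
    moreover have "y < (Suc b choose Suc j)" using y y' by simp
    ultimately show False using H Fx by linarith
  qed
  show ?thesis
  proof (cases "a = b")
    case False
    then have "Suc a \<le> b" using ab by simp
    then have "(Suc a choose Suc (Suc j)) \<le> (b choose Suc (Suc j))" by (rule binomial_right_mono)
    moreover have "x < (Suc a choose Suc (Suc j))" using x x' by simp
    ultimately show ?thesis using Ny by linarith
  next
    case True
    have "kf (Suc j) x' \<le> y'" using H Fx y unfolding True by linarith
    moreover have "j = 0 \<longrightarrow> y' = 0" using y' by auto
    ultimately have "x' \<le> N (Suc j) y'" using IH by blast
    then show ?thesis using x Ny True by simp
  qed
qed

lemma N_bound: "kf (Suc (Suc j)) x \<le> y \<Longrightarrow> x \<le> N (Suc (Suc j)) y"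
proof (induction j arbitrary: x y)
  case (0 x y)
  show ?case
  proof (rule N_bound_gen[OF _ 0])
    fix x' y' :: nat assume "(0::nat) = 0 \<longrightarrow> y' = 0" "kf (Suc 0) x' \<le> y'"
    then show "x' \<le> N (Suc 0) y'" by (cases "x' = 0") auto
  qed
next
  case (Suc j x y)
  show ?case
    by (rule N_bound_gen[OF _ Suc.prems]) (rule Suc.IH)
qed

lemma N_lt: "Suc j \<le> b \<Longrightarrow> y < (b choose j) \<Longrightarrow> N (Suc j) y < (b choose Suc j)"
proof (induction j arbitrary: b y)
  case 0 then show ?case by simp
next
  case (Suc j b y)
  show ?case
  proof (cases "y = 0")
    case True then show ?thesis using Suc.prems by simp
  next
    case False
    then obtain c y' where y: "y = (c choose Suc j) + y'" and y': "y' < (c choose j)"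
      and c: "Suc j \<le> c" and g: "gr (Suc j) y = c"
      using gr_decomp[of y j] by auto
    have Ny: "N (Suc (Suc j)) y = (c choose Suc (Suc j)) + N (Suc j) y'"
      using False g y by simp
    have cb: "c < b"
    proof (rule ccontr)
      assume "\<not> c < b"
      then have "(b choose Suc j) \<le> (c choose Suc j)" by (simp add: binomial_right_mono)
      then show False using y Suc.prems by linarith
    qed
    have "N (Suc j) y' < (c choose Suc j)" using Suc.IH[OF c y'] .
    then have "N (Suc (Suc j)) y < (Suc c choose Suc (Suc j))" using Ny by simp
    moreover have "(Suc c choose Suc (Suc j)) \<le> (b choose Suc (Suc j))"
      using binomial_right_mono[of "Suc c" b "Suc (Suc j)"] cb by simp
    ultimately show ?thesis by linarith
  qed
qed

lemma P_bound: "kf (Suc j) (N (Suc j) y + y) \<le> y + kf j y"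
proof (induction j arbitrary: y)
  case 0
  then show ?case by simp
next
  case (Suc j y)
  show ?case
  proof (cases "y = 0")
    case True then show ?thesis by simp
  next
    case False
    then obtain b y' where y: "y = (b choose Suc j) + y'" and y': "y' < (b choose j)"
      and b: "Suc j \<le> b" and g: "gr (Suc j) y = b"
      using gr_decomp[of y j] by auto
    have Ny: "N (Suc (Suc j)) y = (b choose Suc (Suc j)) + N (Suc j) y'"
      using False g y by simp
    have Nl: "N (Suc j) y' < (b choose Suc j)" by (rule N_lt[OF b y'])
    define z where "z = N (Suc j) y' + y'"
    have eq: "N (Suc (Suc j)) y + y = (Suc b choose Suc (Suc j)) + z"
      using Ny y z_def by simp
    have zl: "z < (Suc b choose Suc j)" using Nl y' z_def by simp
    have Fe: "kf (Suc (Suc j)) (N (Suc (Suc j)) y + y) = (Suc b choose Suc j) + kf (Suc j) z"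
      unfolding eq by (rule F_char[OF zl]) (use b in simp)
    have "kf (Suc j) ((b choose Suc j) + y') = (b choose j) + kf j y'"
      by (rule F_char[OF y']) (use b in simp)
    then have Fy: "kf (Suc j) y = (b choose j) + kf j y'" using y by simp
    have "kf (Suc j) z \<le> y' + kf j y'" using Suc.IH[of y'] z_def by simp
    then show ?thesis using Fe Fy y by simp
  qed
qed

lemma star: "kf (Suc j) x \<le> y \<Longrightarrow> kf (Suc j) (x + y) \<le> y + kf j y"
proof (cases j)
  case 0
  assume H: "kf (Suc j) x \<le> y"
  show ?thesis
  proof (cases "y = 0")
    case True then show ?thesis using H 0 by (cases "x = 0") auto
  next
    case False then show ?thesis using 0 by simp
  qed
next
  case (Suc j')
  assume H: "kf (Suc j) x \<le> y"
  have "x \<le> N (Suc j) y" using N_bound[of j' x y] H Suc by simp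
  then have "kf (Suc j) (x + y) \<le> kf (Suc j) (N (Suc j) y + y)" by (intro F_mono) simp
  also have "\<dots> \<le> y + kf j y" by (rule P_bound)
  finally show ?thesis .
qed


definition shadow :: "'a set set \<Rightarrow> 'a set set" where
  "shadow A = {F - {x} | F x. F \<in> A \<and> x \<in> F}"

lemma shadow_eq: "shadow A = (\<Union>F\<in>A. (\<lambda>x. F - {x}) ` F)"
  unfolding shadow_def by blast

lemma finite_shadow: "finite A \<Longrightarrow> \<forall>F\<in>A. finite F \<Longrightarrow> finite (shadow A)"
  unfolding shadow_eq by auto

definition mv :: "'a \<Rightarrow> 'a \<Rightarrow> 'a set set \<Rightarrow> 'a set \<Rightarrow> 'a set" where
  "mv x u A F = (if x \<in> F \<and> u \<notin> F \<and> insert u (F - {x}) \<notin> A then insert u (F - {x}) else F)"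

definition sh :: "'a \<Rightarrow> 'a \<Rightarrow> 'a set set \<Rightarrow> 'a set set" where
  "sh x u A = mv x u A ` A"

lemma mv_inj: "inj_on (mv x u A) A"
proof (rule inj_onI)
  fix F G assume F: "F \<in> A" and G: "G \<in> A" and e: "mv x u A F = mv x u A G"
  show "F = G"
  proof (cases "x \<in> F \<and> u \<notin> F \<and> insert u (F - {x}) \<notin> A")
    case cF: True
    show ?thesis
    proof (cases "x \<in> G \<and> u \<notin> G \<and> insert u (G - {x}) \<notin> A")
      case cG: True
      have "insert u (F - {x}) = insert u (G - {x})" using e cF cG by (simp add: mv_def)
      then have "insert u (F - {x}) - {u} = insert u (G - {x}) - {u}" by simp
      then have "F - {x} = G - {x}" using cF cG by (simp add: Diff_insert_absorb)
      then show ?thesis using cF cG by blast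
    next
      case cG: False
      have "insert u (F - {x}) = G" using e cF cG by (simp add: mv_def)
      then show ?thesis using cF G by blast
    qed
  next
    case cF: False
    show ?thesis
    proof (cases "x \<in> G \<and> u \<notin> G \<and> insert u (G - {x}) \<notin> A")
      case cG: True
      have "F = insert u (G - {x})" using e cF cG by (simp add: mv_def)
      then show ?thesis using cG F by blast
    next
      case cG: False
      show ?thesis using e cF cG by (simp add: mv_def)
    qed
  qed
qed

lemma card_sh: "card (sh x u A) = card A"
  unfolding sh_def by (rule card_image[OF mv_inj])

lemma shadow_sh: "shadow (sh x u A) \<subseteq> sh x u (shadow A)"
proof
  fix G assume "G \<in> shadow (sh x u A)"
  then obtain H y where H: "H \<in> sh x u A" and y: "y \<in> H" and G: "G = H - {y}"
    unfolding shadow_def by blast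
  obtain F where F: "F \<in> A" and HF: "H = mv x u A F" using H unfolding sh_def by blast
  show "G \<in> sh x u (shadow A)"
  proof (cases "x \<in> F \<and> u \<notin> F \<and> insert u (F - {x}) \<notin> A")
    case False
    then have HF': "H = F" unfolding HF mv_def by (rule if_not_P)
    have Gs: "G \<in> shadow A" using F y G HF' unfolding shadow_def by blast
    have "mv x u (shadow A) G = G"
    proof (rule ccontr)
      assume "mv x u (shadow A) G \<noteq> G"
      then have c: "x \<in> G" "u \<notin> G" "insert u (G - {x}) \<notin> shadow A"
        unfolding mv_def by (auto split: if_splits)
      show False
      proof (cases "u = y")
        case True
        have "insert u (G - {x}) = F - {x}" using c True G HF' y by blast
        moreover have "x \<in> F" using c G HF' by blast
        ultimately have "insert u (G - {x}) \<in> shadow A" using F unfolding shadow_def by blast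
        then show False using c by blast
      next
        case False
        then have uF: "u \<notin> F" using c G HF' by blast
        have xF: "x \<in> F" using c G HF' by blast
        then have I: "insert u (F - {x}) \<in> A" using uF \<open>\<not> (x \<in> F \<and> u \<notin> F \<and> insert u (F - {x}) \<notin> A)\<close> by blast
        have "y \<noteq> x" using c G by blast
        then have "insert u (G - {x}) = insert u (F - {x}) - {y}" using G HF' False by blast
        moreover have "y \<in> insert u (F - {x})" using y HF' \<open>y \<noteq> x\<close> by blast
        ultimately have "insert u (G - {x}) \<in> shadow A" using I unfolding shadow_def by blast
        then show False using c by blast
      qed
    qed
    then show ?thesis using Gs unfolding sh_def by (metis image_eqI)
  next
    case True
    then have HF': "H = insert u (F - {x})" using HF by (simp add: mv_def)
    show ?thesis
    proof (cases "y = u")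
      case True
      have G1: "G = F - {x}" using G HF' True \<open>x \<in> F \<and> u \<notin> F \<and> insert u (F - {x}) \<notin> A\<close> by blast
      have Gs: "G \<in> shadow A" using F G1 True \<open>x \<in> F \<and> u \<notin> F \<and> insert u (F - {x}) \<notin> A\<close> unfolding shadow_def by blast
      have "mv x u (shadow A) G = G" using G1 unfolding mv_def by auto
      then show ?thesis using Gs unfolding sh_def by (metis image_eqI)
    next
      case False
      have xy: "y \<noteq> x" using y HF' False by blast
      have yF: "y \<in> F" using y HF' False by blast
      have Fy: "F - {y} \<in> shadow A" using F yF unfolding shadow_def by blast
      have G2: "G = insert u ((F - {y}) - {x})" using G HF' False by blast
      show ?thesis
      proof (cases "G \<in> shadow A")
        case True
        have "mv x u (shadow A) G = G" using G2 unfolding mv_def by auto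
        then show ?thesis using True unfolding sh_def by (metis image_eqI)
      next
        case False
        have "mv x u (shadow A) (F - {y}) = G"
          using G2 False xy \<open>x \<in> F \<and> u \<notin> F \<and> insert u (F - {x}) \<notin> A\<close>
          unfolding mv_def by auto
        then show ?thesis using Fy unfolding sh_def by (metis image_eqI)
      qed
    qed
  qed
qed

lemma card_shadow_sh:
  assumes "finite A" "\<forall>F\<in>A. finite F"
  shows "card (shadow (sh x u A)) \<le> card (shadow A)"
proof -
  have "finite (sh x u (shadow A))"
    unfolding sh_def using finite_shadow[OF assms] by simp
  then have "card (shadow (sh x u A)) \<le> card (sh x u (shadow A))"
    using shadow_sh by (rule card_mono)
  also have "\<dots> = card (shadow A)" by (rule card_sh)
  finally show ?thesis .
qed


lemma sh_cnt:
  assumes A: "finite A" and F0: "F0 \<in> A" "x \<in> F0" "u \<notin> F0" "insert u (F0 - {x}) \<notin> A"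
  shows "card {G \<in> sh x u A. u \<notin> G} < card {F \<in> A. u \<notin> F}"
proof -
  have sub: "{G \<in> sh x u A. u \<notin> G} \<subseteq> {F \<in> A. u \<notin> F} - {F0}"
  proof
    fix G assume "G \<in> {G \<in> sh x u A. u \<notin> G}"
    then obtain F where F: "F \<in> A" "G = mv x u A F" "u \<notin> G" unfolding sh_def by blast
    then have "G = F" unfolding mv_def by (auto split: if_splits)
    moreover have "F \<noteq> F0" using F F0 unfolding mv_def by auto
    ultimately show "G \<in> {F \<in> A. u \<notin> F} - {F0}" using F by blast
  qed
  have fin: "finite {F \<in> A. u \<notin> F}" using A by simp
  have "card {G \<in> sh x u A. u \<notin> G} \<le> card ({F \<in> A. u \<notin> F} - {F0})"
    using sub fin by (intro card_mono) auto
  also have "\<dots> < card {F \<in> A. u \<notin> F}"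
    using fin F0 by (intro card_Diff1_less) auto
  finally show ?thesis .
qed

lemma sh_uniform:
  assumes "u \<in> V" "finite V" "A \<subseteq> {F. F \<subseteq> V \<and> card F = k}"
  shows "sh x u A \<subseteq> {F. F \<subseteq> V \<and> card F = k}"
proof
  fix G assume "G \<in> sh x u A"
  then obtain F where F: "F \<in> A" "G = mv x u A F" unfolding sh_def by blast
  have FV: "F \<subseteq> V" "card F = k" using F assms by auto
  have finF: "finite F" using FV assms finite_subset by blast
  show "G \<in> {F. F \<subseteq> V \<and> card F = k}"
  proof (cases "x \<in> F \<and> u \<notin> F \<and> insert u (F - {x}) \<notin> A")
    case True
    then have G: "G = insert u (F - {x})" using F unfolding mv_def by simp
    have "card G = Suc (card (F - {x}))" using G True finF by simp
    also have "\<dots> = card F" using True finF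
      by (metis card_Suc_Diff1)
    finally show ?thesis using G FV assms(1) by auto
  next
    case False
    have "mv x u A F = F" unfolding mv_def by (rule if_not_P[OF False])
    then show ?thesis using FV F by simp
  qed
qed

lemma stabilize:
  assumes V: "finite V" "u \<in> V" and A: "A \<subseteq> {F. F \<subseteq> V \<and> card F = k}"
  shows "\<exists>B. B \<subseteq> {F. F \<subseteq> V \<and> card F = k} \<and> card B = card A \<and>
     card (shadow B) \<le> card (shadow A) \<and> (\<forall>F\<in>B. \<forall>x\<in>F. u \<notin> F \<longrightarrow> insert u (F - {x}) \<in> B)"
  using A
proof (induction "card {F\<in>A. u \<notin> F}" arbitrary: A rule: less_induct)
  case (less A)
  have "A \<subseteq> Pow V" using less.prems by auto
  then have finA: "finite A" using V(1) by (simp add: finite_subset)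
  have finF: "\<forall>F\<in>A. finite F" using less.prems V(1) by (auto intro: finite_subset)
  show ?case
  proof (cases "\<forall>F\<in>A. \<forall>x\<in>F. u \<notin> F \<longrightarrow> insert u (F - {x}) \<in> A")
    case True
    show ?thesis by (rule exI[of _ A]) (use less.prems True in simp)
  next
    case False
    then obtain F0 x where F0: "F0 \<in> A" "x \<in> F0" "u \<notin> F0" "insert u (F0 - {x}) \<notin> A" by blast
    define A' where "A' = sh x u A"
    have lt: "card {F\<in>A'. u \<notin> F} < card {F\<in>A. u \<notin> F}"
      unfolding A'_def by (rule sh_cnt[OF finA F0])
    have A'u: "A' \<subseteq> {F. F \<subseteq> V \<and> card F = k}"
      unfolding A'_def by (rule sh_uniform[OF V(2) V(1) less.prems])
    obtain B where B: "B \<subseteq> {F. F \<subseteq> V \<and> card F = k}" "card B = card A'"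
      "card (shadow B) \<le> card (shadow A')"
      "\<forall>F\<in>B. \<forall>x\<in>F. u \<notin> F \<longrightarrow> insert u (F - {x}) \<in> B"
      using less.hyps[OF lt A'u] by blast
    have "card A' = card A" unfolding A'_def by (rule card_sh)
    moreover have "card (shadow A') \<le> card (shadow A)"
      unfolding A'_def by (rule card_shadow_sh[OF finA finF])
    ultimately show ?thesis
      by (intro exI[of _ B]) (use B in simp)
  qed
qed



lemma KK_fin:
  assumes "finite V" "A \<subseteq> {F. F \<subseteq> V \<and> card F = k}"
  shows "kf k (card A) \<le> card (shadow A)"
  using assms
proof (induction V arbitrary: k A rule: finite_induct)
  case empty
  show ?case
  proof (cases k)
    case 0 then show ?thesis by simp
  next
    case (Suc j)
    then have "A = {}" using empty.prems by auto
    then show ?thesis by simp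
  qed
next
  case (insert u V)
  show ?case
  proof (cases k)
    case 0 then show ?thesis by simp
  next
    case (Suc j)
    define W where "W = insert u V"
    have finW: "finite W" using insert.hyps W_def by simp
    have "u \<in> W" using W_def by simp
    from stabilize[OF finW this insert.prems[folded W_def]]
    obtain B where B: "B \<subseteq> {F. F \<subseteq> W \<and> card F = k}" "card B = card A"
      "card (shadow B) \<le> card (shadow A)"
      and st: "\<forall>F\<in>B. \<forall>x\<in>F. u \<notin> F \<longrightarrow> insert u (F - {x}) \<in> B"
      by (elim exE conjE)
    have "B \<subseteq> Pow W" using B(1) by auto
    then have finB: "finite B" using finW by (simp add: finite_subset)
    have finFB: "\<forall>F\<in>B. finite F" using B(1) finW by (auto intro: finite_subset)
    define B0 where "B0 = {F \<in> B. u \<notin> F}"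
    define Bu where "Bu = {F \<in> B. u \<in> F}"
    define B1 where "B1 = (\<lambda>F. F - {u}) ` Bu"
    have B0s: "B0 \<subseteq> {F. F \<subseteq> V \<and> card F = k}" using B(1) W_def B0_def by auto
    have B1s: "B1 \<subseteq> {F. F \<subseteq> V \<and> card F = j}"
    proof
      fix G assume "G \<in> B1"
      then obtain F where F: "F \<in> B" "u \<in> F" "G = F - {u}" unfolding B1_def Bu_def by blast
      have "card G = card F - 1" using F finFB by simp
      then show "G \<in> {F. F \<subseteq> V \<and> card F = j}" using F B(1) W_def Suc by auto
    qed
    have IH0: "kf k (card B0) \<le> card (shadow B0)" by (rule insert.IH[OF B0s])
    have IH1: "kf j (card B1) \<le> card (shadow B1)" by (rule insert.IH[OF B1s])
    have injBu: "inj_on (\<lambda>F. F - {u}) Bu"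
      by (rule inj_onI) (metis Bu_def insert_Diff mem_Collect_eq)
    have cB1: "card B1 = card Bu" unfolding B1_def by (rule card_image[OF injBu])
    have cB: "card B = card B0 + card Bu"
    proof -
      have "B = B0 \<union> Bu" "B0 \<inter> Bu = {}" unfolding B0_def Bu_def by auto
      moreover have "finite B0" "finite Bu" using finB B0_def Bu_def by auto
      ultimately show ?thesis by (simp add: card_Un_disjoint)
    qed
    have finB1: "finite B1" using finB B1_def Bu_def by auto
    have "shadow B0 \<subseteq> B1"
    proof
      fix G assume "G \<in> shadow B0"
      then obtain F y where F: "F \<in> B" "u \<notin> F" "y \<in> F" "G = F - {y}"
        unfolding shadow_def B0_def by blast
      have I: "insert u (F - {y}) \<in> Bu" using st F unfolding Bu_def by blast
      have "insert u (F - {y}) - {u} = G" using F by auto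
      then show "G \<in> B1" using I unfolding B1_def by (metis image_eqI)
    qed
    then have s0: "card (shadow B0) \<le> card B1" using finB1 by (rule card_mono[rotated])
    have uB1: "\<forall>G\<in>shadow B1. u \<notin> G" unfolding shadow_def B1_def by auto
    have sub: "B1 \<union> insert u ` shadow B1 \<subseteq> shadow B"
    proof
      fix G assume "G \<in> B1 \<union> insert u ` shadow B1"
      then show "G \<in> shadow B"
      proof
        assume "G \<in> B1"
        then obtain F where "F \<in> B" "u \<in> F" "G = F - {u}" unfolding B1_def Bu_def by blast
        then show ?thesis unfolding shadow_def by blast
      next
        assume "G \<in> insert u ` shadow B1"
        then obtain T where T: "T \<in> shadow B1" "G = insert u T" by blast
        then obtain H y where H: "H \<in> B1" "y \<in> H" "T = H - {y}" unfolding shadow_def by blast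
        then obtain F where F: "F \<in> B" "u \<in> F" "H = F - {u}" unfolding B1_def Bu_def by blast
        have "G = F - {y}" using T H F by auto
        moreover have "y \<in> F" using H F by auto
        ultimately show ?thesis using F unfolding shadow_def by blast
      qed
    qed
    have "\<forall>F\<in>B1. finite F" using B1s insert.hyps(1) by (auto intro: finite_subset)
    then have finSB1: "finite (shadow B1)" by (rule finite_shadow[OF finB1])
    have disj: "B1 \<inter> insert u ` shadow B1 = {}" unfolding B1_def by auto
    have "card (B1 \<union> insert u ` shadow B1) = card B1 + card (insert u ` shadow B1)"
      by (rule card_Un_disjoint[OF finB1 _ disj]) (use finSB1 in simp)
    also have "card (insert u ` shadow B1) = card (shadow B1)"
      using uB1 by (intro card_image inj_onI) (metis Diff_insert_absorb)
    moreover have "card (B1 \<union> insert u ` shadow B1) \<le> card (shadow B)"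
      by (rule card_mono[OF finite_shadow[OF finB finFB] sub])
    ultimately have s1: "card B1 + card (shadow B1) \<le> card (shadow B)" by simp
    have "kf k (card A) = kf (Suc j) (card B0 + card B1)" using B(2) cB cB1 Suc by simp
    also have "\<dots> \<le> card B1 + kf j (card B1)"
      by (rule star) (use IH0 s0 Suc in simp)
    also have "\<dots> \<le> card (shadow A)" using IH1 s1 B(3) by linarith
    finally show ?thesis .
  qed
qed

lemma KK:
  assumes "finite A" "\<forall>F\<in>A. finite F \<and> card F = k"
  shows "kf k (card A) \<le> card (shadow A)"
proof (rule KK_fin)
  show "finite (\<Union>A)" using assms by auto
  show "A \<subseteq> {F. F \<subseteq> \<Union>A \<and> card F = k}" using assms by auto
qed


lemma exp_ge:
  assumes "j \<le> a j" "\<forall>t\<in>{j..<k}. a t < a (Suc t)" "j \<le> t" "t \<le> k"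
  shows "t \<le> a t"
  using assms(3,4)
proof (induction t)
  case 0 then show ?case by simp
next
  case (Suc t)
  show ?case
  proof (cases "j = Suc t")
    case True then show ?thesis using assms(1) by simp
  next
    case False
    then have "j \<le> t" "t \<in> {j..<k}" using Suc.prems by auto
    then show ?thesis using Suc.IH assms(2) Suc.prems by fastforce
  qed
qed

lemma exp_tail:
  assumes "1 \<le> j" "j \<le> a j" "\<forall>t\<in>{j..<k}. a t < a (Suc t)" "j \<le> k"
  shows "(\<Sum>t=j..k. a t choose t) < (Suc (a k) choose k)"
  using assms
proof (induction k)
  case 0 then show ?case by simp
next
  case (Suc k)
  show ?case
  proof (cases "j = Suc k")
    case True
    have "0 < (a (Suc k) choose k)" using Suc.prems True by simp
    then show ?thesis using True by simp
  next
    case False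
    then have jk: "j \<le> k" using Suc.prems by simp
    have h: "\<forall>t\<in>{j..<k}. a t < a (Suc t)" using Suc.prems(3) by auto
    have IH: "(\<Sum>t=j..k. a t choose t) < (Suc (a k) choose k)"
      using Suc.IH[OF Suc.prems(1,2) h jk] .
    have "k \<in> {j..<Suc k}" using jk by simp
    then have "a k < a (Suc k)" using Suc.prems(3) by blast
    then have "Suc (a k) \<le> a (Suc k)" by simp
    then have "(Suc (a k) choose k) \<le> (a (Suc k) choose k)" by (rule binomial_right_mono)
    moreover have "(\<Sum>t=j..Suc k. a t choose t) = (a (Suc k) choose Suc k) + (\<Sum>t=j..k. a t choose t)"
      using Suc.prems(4) by simp
    ultimately show ?thesis using IH by simp
  qed
qed


lemma exp_kf:
  "binom_expansion k m j a \<Longrightarrow> (\<Sum>t=j..k. a t choose (t - 1)) = kf k m"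
proof (induction k arbitrary: m)
  case 0 then show ?case by (auto simp: binom_expansion_def)
next
  case (Suc k m)
  have j1: "1 \<le> j" and jk: "j \<le> Suc k" and aj: "j \<le> a j"
    and inc: "\<forall>t\<in>{j..<Suc k}. a t < a (Suc t)" and m: "m = (\<Sum>t=j..Suc k. a t choose t)"
    using Suc.prems unfolding binom_expansion_def by auto
  have ak: "Suc k \<le> a (Suc k)" using exp_ge[OF aj inc, of "Suc k"] jk by simp
  show ?case
  proof (cases "j = Suc k")
    case True
    have m': "m = (a (Suc k) choose Suc k) + 0" using m True by simp
    have "kf (Suc k) m = (a (Suc k) choose k) + kf k 0"
      unfolding m' by (rule F_char) (use ak in simp_all)
    then show ?thesis using True by simp
  next
    case False
    then have jk': "j \<le> k" using jk by simp
    define r where "r = (\<Sum>t=j..k. a t choose t)"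
    have m': "m = (a (Suc k) choose Suc k) + r" using m jk' r_def by simp
    have inc': "\<forall>t\<in>{j..<k}. a t < a (Suc t)" using inc by auto
    have "r < (Suc (a k) choose k)" unfolding r_def by (rule exp_tail[OF j1 aj inc' jk'])
    moreover have "k \<in> {j..<Suc k}" using jk' by simp
    then have "Suc (a k) \<le> a (Suc k)" using inc by (simp add: Suc_le_eq)
    then have "(Suc (a k) choose k) \<le> (a (Suc k) choose k)" by (rule binomial_right_mono)
    ultimately have rl: "r < (a (Suc k) choose k)" by simp
    have Fm: "kf (Suc k) m = (a (Suc k) choose k) + kf k r"
      unfolding m' by (rule F_char[OF rl]) (use ak in simp)
    have "binom_expansion k r j a"
      unfolding binom_expansion_def using j1 jk' aj inc' r_def by simp
    then have IH: "(\<Sum>t=j..k. a t choose (t - 1)) = kf k r" by (rule Suc.IH)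
    have "(\<Sum>t=j..Suc k. a t choose (t - 1)) = (a (Suc k) choose k) + (\<Sum>t=j..k. a t choose (t - 1))"
      using jk by simp
    then show ?thesis using IH Fm by simp
  qed
qed

lemma exp_ex: "1 \<le> k \<Longrightarrow> 0 < m \<Longrightarrow> \<exists>j a. binom_expansion k m j a"
proof (induction k arbitrary: m)
  case 0 then show ?case by simp
next
  case (Suc k m)
  obtain b r where m: "m = (b choose Suc k) + r" and r: "r < (b choose k)" and b: "Suc k \<le> b"
    using F_decomp[OF Suc.prems(2)] by blast
  show ?case
  proof (cases "r = 0")
    case True
    have "binom_expansion (Suc k) m (Suc k) (\<lambda>_. b)"
      unfolding binom_expansion_def using m True b by simp
    then show ?thesis by blast
  next
    case False
    then have k1: "1 \<le> k" using r by (cases k) auto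
    obtain j a where e: "binom_expansion k r j a" using Suc.IH[OF k1] False by blast
    have j1: "1 \<le> j" and jk: "j \<le> k" and aj: "j \<le> a j"
      and inc: "\<forall>t\<in>{j..<k}. a t < a (Suc t)" and rs: "r = (\<Sum>t=j..k. a t choose t)"
      using e unfolding binom_expansion_def by auto
    define a' where "a' = a(Suc k := b)"
    have "(a k choose k) \<le> r" unfolding rs by (rule member_le_sum) (use jk in auto)
    then have akb: "a k < b"
    proof -
      assume h: "(a k choose k) \<le> r"
      show "a k < b"
      proof (rule ccontr)
        assume "\<not> a k < b"
        then have "(b choose k) \<le> (a k choose k)" by (simp add: binomial_right_mono)
        then show False using h r by simp
      qed
    qed
    have inc': "\<forall>t\<in>{j..<Suc k}. a' t < a' (Suc t)"
    proof
      fix t assume t: "t \<in> {j..<Suc k}"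
      show "a' t < a' (Suc t)"
      proof (cases "t = k")
        case True then show ?thesis using akb a'_def by simp
      next
        case False then show ?thesis using t inc a'_def by auto
      qed
    qed
    have sumeq: "(\<Sum>t=j..k. a' t choose t) = (\<Sum>t=j..k. a t choose t)"
      by (rule sum.cong) (auto simp: a'_def)
    have "m = (\<Sum>t=j..Suc k. a' t choose t)"
      using m rs sumeq jk a'_def by simp
    moreover have "j \<le> a' j" using aj jk a'_def by simp
    ultimately have "binom_expansion (Suc k) m j a'"
      unfolding binom_expansion_def using j1 jk inc' by simp
    then show ?thesis by blast
  qed
qed

lemma mu_eq: "1 \<le> k \<Longrightarrow> mu k m = kf k m"
proof (cases "m = 0")
  case True then show ?thesis by (simp add: mu_def)
next
  case False
  assume k: "1 \<le> k"
  obtain j a where e: "binom_expansion k m j a" using exp_ex[OF k] False by blast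
  have "(THE s. \<exists>j a. binom_expansion k m j a \<and> s = (\<Sum>t=j..k. a t choose (t - 1))) = kf k m"
  proof (rule the_equality)
    show "\<exists>j a. binom_expansion k m j a \<and> kf k m = (\<Sum>t=j..k. a t choose (t - 1))"
      using e exp_kf[OF e] by metis
  next
    fix s assume "\<exists>j a. binom_expansion k m j a \<and> s = (\<Sum>t=j..k. a t choose (t - 1))"
    then show "s = kf k m" using exp_kf by blast
  qed
  then show ?thesis using False by (simp add: mu_def)
qed


definition emb :: "'a set \<Rightarrow> 'a option \<Rightarrow> ('a \<times> bool) set" where
  "emb F w = (case w of None \<Rightarrow> (\<lambda>x. (x, False)) ` F
     | Some v \<Rightarrow> insert (v, True) ((\<lambda>x. (x, False)) ` (F - {v})))"

definition opts :: "'a set \<Rightarrow> 'a option set" where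
  "opts F = insert None (Some ` F)"

lemma card_opts: "finite F \<Longrightarrow> card (opts F) = Suc (card F)"
  unfolding opts_def by (simp add: card_image)

lemma fst_emb: "w \<in> opts F \<Longrightarrow> fst ` emb F w = F"
  unfolding opts_def emb_def by (auto simp: image_iff)

lemma true_emb: "w \<in> opts F \<Longrightarrow> {x. (x, True) \<in> emb F w} = set_option w"
  unfolding opts_def emb_def by auto

lemma emb_inj: "inj_on (\<lambda>(F, w). emb F w) (SIGMA F:A. opts F)"
proof (rule inj_onI, clarify)
  fix F w G w' assume w: "w \<in> opts F" and w': "w' \<in> opts G" and e: "emb F w = emb G w'"
  have "F = G" using fst_emb[OF w] fst_emb[OF w'] e by simp
  moreover have "set_option w = set_option w'" using true_emb[OF w] true_emb[OF w'] e by simp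
  then have "w = w'" by (cases w; cases w') auto
  ultimately show "F = G \<and> w = w'" by simp
qed

lemma card_emb: "finite F \<Longrightarrow> w \<in> opts F \<Longrightarrow> card (emb F w) = card F"
proof -
  assume f: "finite F" and w: "w \<in> opts F"
  have inj: "inj (\<lambda>x::'a. (x, False))" by (rule injI) simp
  show ?thesis
  proof (cases w)
    case None then show ?thesis unfolding emb_def
      by (simp add: card_image inj_on_def)
  next
    case (Some v)
    then have v: "v \<in> F" using w unfolding opts_def by auto
    have "card (emb F w) = Suc (card ((\<lambda>x. (x, False)) ` (F - {v})))"
      unfolding emb_def Some using f by (simp add: image_iff)
    also have "\<dots> = Suc (card (F - {v}))" by (simp add: card_image inj_on_def)
    also have "\<dots> = card F" using card_Suc_Diff1[OF f v] .
    finally show ?thesis .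
  qed
qed

lemma shadow_emb:
  assumes "H \<in> shadow ((\<lambda>(F, w). emb F w) ` (SIGMA F:A. opts F))"
  shows "\<exists>F w y. F \<in> A \<and> y \<in> F \<and> w \<in> opts (F - {y}) \<and> H = emb (F - {y}) w"
proof -
  obtain F w p where F: "F \<in> A" and w: "w \<in> opts F" and p: "p \<in> emb F w" and H: "H = emb F w - {p}"
    using assms unfolding shadow_def by auto
  show ?thesis
  proof (cases w)
    case None
    then obtain y where y: "y \<in> F" "p = (y, False)" using p unfolding emb_def by auto
    have "H = emb (F - {y}) None" using H None y unfolding emb_def by auto
    moreover have "None \<in> opts (F - {y})" unfolding opts_def by simp
    ultimately show ?thesis using F y by blast
  next
    case (Some v)
    then have v: "v \<in> F" using w unfolding opts_def by auto
    show ?thesis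
    proof (cases "p = (v, True)")
      case True
      have "H = emb (F - {v}) None" using H Some True unfolding emb_def by auto
      moreover have "None \<in> opts (F - {v})" unfolding opts_def by simp
      ultimately show ?thesis using F v by blast
    next
      case False
      then obtain y where y: "y \<in> F" "y \<noteq> v" "p = (y, False)" using p Some unfolding emb_def by auto
      have "H = emb (F - {y}) (Some v)" using H Some y unfolding emb_def by auto
      moreover have "Some v \<in> opts (F - {y})" unfolding opts_def using v y by simp
      ultimately show ?thesis using F y by blast
    qed
  qed
qed


theorem corollary3p8:
  fixes K :: "'a set set" and d i :: nat
  assumes "simplicial_complex K"
    and "\<forall>F\<in>K. card F \<le> d"
    and "1 \<le> i" and "i \<le> d - 1"
  shows "mu (i + 1) ((i + 2) * fvec K (int i)) \<le> (i + 1) * fvec K (int i - 1)"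
proof -
  have finK: "finite K" and finF: "\<forall>F\<in>K. finite F" and down: "\<forall>F\<in>K. \<forall>G. G \<subseteq> F \<longrightarrow> G \<in> K"
    using assms(1) unfolding simplicial_complex_def by auto
  define A where "A = {F\<in>K. card F = Suc i}"
  define I where "I = {G\<in>K. card G = i}"
  have fA: "fvec K (int i) = card A"
    unfolding fvec_def A_def by (rule arg_cong[where f=card], rule Collect_cong) linarith
  have fI: "fvec K (int i - 1) = card I"
    unfolding fvec_def I_def by (rule arg_cong[where f=card], rule Collect_cong) linarith
  define B where "B = (\<lambda>(F, w). emb F w) ` (SIGMA F:A. opts F)"
  have finA: "finite A" using finK A_def by simp
  have finI: "finite I" using finK I_def by simp
  have finAF: "\<forall>F\<in>A. finite F" using finF A_def by simp
  have finIF: "\<forall>F\<in>I. finite F" using finF I_def by simp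
  have "card B = card (SIGMA F:A. opts F)" unfolding B_def by (rule card_image[OF emb_inj])
  also have "\<dots> = (\<Sum>F\<in>A. card (opts F))"
  proof (rule card_SigmaI[OF finA])
    show "\<forall>a\<in>A. finite (opts a)" using finAF unfolding opts_def by simp
  qed
  also have "\<dots> = (\<Sum>F\<in>A. Suc (Suc i))"
  proof (rule sum.cong)
    fix x assume x: "x \<in> A"
    have "finite x" using x finAF by blast
    then have "card (opts x) = Suc (card x)" by (rule card_opts)
    then show "card (opts x) = Suc (Suc i)" using x A_def by simp
  qed simp
  finally have cB: "card B = (i + 2) * card A" by simp
  have finB: "finite B" unfolding B_def using finA finAF by (simp add: opts_def)
  have unifB: "\<forall>H\<in>B. finite H \<and> card H = Suc i"
  proof
    fix H assume "H \<in> B"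
    then obtain F w where F: "F \<in> A" "w \<in> opts F" "H = emb F w" unfolding B_def by auto
    have "card H = card F" unfolding F(3) by (rule card_emb) (use F finAF in auto)
    moreover have "card F = Suc i" using F(1) A_def by simp
    ultimately have cH: "card H = Suc i" by simp
    then have "finite H" by (intro card_ge_0_finite) simp
    then show "finite H \<and> card H = Suc i" using cH by simp
  qed
  have kk: "kf (Suc i) (card B) \<le> card (shadow B)" by (rule KK[OF finB unifB])
  have sub: "shadow B \<subseteq> (\<lambda>(F, w). emb F w) ` (SIGMA G:I. opts G)"
  proof
    fix H assume "H \<in> shadow B"
    from shadow_emb[OF this[unfolded B_def]]
    obtain F w y where F: "F \<in> A" "y \<in> F" "w \<in> opts (F - {y})" "H = emb (F - {y}) w"
      by blast
    have FK: "F \<in> K" using F(1) A_def by simp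
    have "F - {y} \<in> K" by (rule down[rule_format, OF FK]) auto
    have cF: "card F = Suc i" using F(1) A_def by simp
    have fF: "finite F" using F(1) finAF by blast
    have "card (F - {y}) = card F - 1" using card_Diff_singleton[OF F(2)] .
    then have "card (F - {y}) = i" using cF by simp
    moreover note \<open>F - {y} \<in> K\<close>
    ultimately have FI: "F - {y} \<in> I" using I_def by simp
    show "H \<in> (\<lambda>(F, w). emb F w) ` (SIGMA G:I. opts G)"
    proof (rule image_eqI[where x="(F - {y}, w)"])
      show "H = (\<lambda>(F, w). emb F w) (F - {y}, w)" using F(4) by simp
      show "(F - {y}, w) \<in> (SIGMA G:I. opts G)" using FI F(3) by simp
    qed
  qed
  have finS: "finite (SIGMA G:I. opts G)" using finI finIF by (simp add: opts_def)
  have "card (shadow B) \<le> card ((\<lambda>(F, w). emb F w) ` (SIGMA G:I. opts G))"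
    by (rule card_mono[OF finite_imageI[OF finS] sub])
  also have "\<dots> \<le> card (SIGMA G:I. opts G)" by (rule card_image_le[OF finS])
  also have "\<dots> = (\<Sum>G\<in>I. card (opts G))"
  proof (rule card_SigmaI[OF finI])
    show "\<forall>a\<in>I. finite (opts a)" using finIF unfolding opts_def by simp
  qed
  also have "\<dots> = (\<Sum>G\<in>I. Suc i)"
  proof (rule sum.cong)
    fix x assume x: "x \<in> I"
    have "finite x" using x finIF by blast
    then have "card (opts x) = Suc (card x)" by (rule card_opts)
    then show "card (opts x) = Suc i" using x I_def by simp
  qed simp
  finally have sB: "card (shadow B) \<le> (i + 1) * card I" by (simp add: mult.commute)
  have "mu (i + 1) ((i + 2) * fvec K (int i)) = kf (Suc i) (card B)"
    using mu_eq[of "i + 1"] fA cB by simp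
  also have "\<dots> \<le> (i + 1) * fvec K (int i - 1)" using kk sB fI by simp
  finally show ?thesis .
qed

end
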